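(* Let $k$ be an odd positive integer, $\ell\in\{0,1,2,\ldots\}$ and $a$ real. Whenever all the arguments of $\tilde\gamma_\cdot$ below are positive, one has $$\sum_{r=1}^{k}(-1)^{r-1}\tilde\gamma_\ell\left(\frac rk-a\right)=k\sum_{j=0}^{\ell}(-1)^j\binom{\ell}{j}\tilde\gamma_{\ell-j}(1-ak)\log^jk,$$ and, if in addition $a>0$, $$\sum_{r=1}^{k}(-1)^{r-1}\tilde\gamma_\ell\left(\frac rk+a\right)=k\sum_{j=0}^{\ell-1}(-1)^j\binom{\ell}{j}\tilde\gamma_{\ell-j}(1+ak)\log^jk+k(-1)^\ell\tilde\psi(ak)\log^\ell k+\frac{(-1)^\ell}{a}\log^\ell k.$$
   Context: For $q>0$, $\zeta_E(z,q)=\sum_{n=0}^\infty (-1)^n (n+q)^{-z}$ for $\mathrm{Re}(z)>0$, extended by analytic continuation to an entire function of $z$. The modified Stieltjes constants $\tilde\gamma_m(q)$ are defined by the Taylor expansion $\zeta_E(z,q)=\sum_{m=0}^\infty\frac{(-1)^m\tilde\gamma_m(q)}{m!}(z-1)^m$. The modified digamma function is $\tilde\psi(q):=-\tilde\gamma_0(q)=-\zeta_E(1,q)$. Convention: $\log^0 k=1$. *)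

theory Defs
  imports "HOL-Complex_Analysis.Complex_Analysis"
begin

text \<open>Alternating Hurwitz zeta function, given by its (conditionally convergent)
  defining series; this is the correct value on the half plane Re z > 0, which
  contains a neighbourhood of z = 1, where all Taylor coefficients are taken.\<close>
definition zeta_E :: "complex \<Rightarrow> real \<Rightarrow> complex" where
  "zeta_E z q = (\<Sum>n. (-1) ^ n * (complex_of_real (real n + q)) powr (- z))"

text \<open>Modified Stieltjes constants: zeta_E(z,q) = sum_m (-1)^m gamma_m(q)/m! (z-1)^m,
  i.e. gamma_m(q) = (-1)^m times the m-th derivative at 1 (the value is real).\<close>
definition mod_stieltjes :: "nat \<Rightarrow> real \<Rightarrow> real" where
  "mod_stieltjes m q = Re ((-1) ^ m * (deriv ^^ m) (\<lambda>z. zeta_E z q) 1)"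

definition mod_digamma :: "real \<Rightarrow> real" where
  "mod_digamma q = - mod_stieltjes 0 q"

end

theory Submission
  imports Defs
begin


definition pw :: "real \<Rightarrow> complex \<Rightarrow> complex" where
  "pw t z = exp (- z * complex_of_real (ln t))"

lemma powr_pw: "t > 0 \<Longrightarrow> complex_of_real t powr (- z) = pw t z"
  by (simp add: powr_def pw_def Ln_of_real)

lemma norm_pw: "norm (pw t z) = exp (- Re z * ln t)"
  by (simp add: pw_def norm_exp_eq_Re)

lemma norm_pw': "t > 0 \<Longrightarrow> norm (pw t z) = t powr (- Re z)"
  by (simp add: norm_pw powr_def)

lemma pw_mult: "s > 0 \<Longrightarrow> t > 0 \<Longrightarrow> pw (s * t) z = pw s z * pw t z"
  by (simp add: pw_def ln_mult exp_add[symmetric] algebra_simps)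

lemma pw_1: "t > 0 \<Longrightarrow> pw t 1 = 1 / complex_of_real t"
  by (simp add: pw_def exp_minus exp_of_real inverse_eq_divide)

lemma zeta_E_pw: "q > 0 \<Longrightarrow> zeta_E z q = (\<Sum>n. (-1) ^ n * pw (real n + q) z)"
proof -
  assume q: "q > 0"
  have "complex_of_real (real n + q) powr (-z) = pw (real n + q) z" for n
    using q by (intro powr_pw) (simp add: add_nonneg_pos)
  then show ?thesis unfolding zeta_E_def by presburger
qed

lemma pw_holo [holomorphic_intros]: "(\<lambda>z. pw t z) holomorphic_on S"
  unfolding pw_def by (intro holomorphic_intros)

lemma pair_bound:
  assumes "a > 0" "Re z > 0"
  shows "norm (pw a z - pw (a+1) z) \<le> norm z * a powr (- Re z - 1)"
proof -
  define f where "f = (\<lambda>t. pw t z)"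
  define D where "D = (\<lambda>t. - z / complex_of_real t * pw t z)"
  have der: "(f has_derivative (\<lambda>h. h *\<^sub>R D t)) (at t)" if "t > 0" for t
  proof -
    have h1: "((\<lambda>t. complex_of_real (ln t)) has_vector_derivative complex_of_real (1 / t)) (at t)"
      using that by (intro has_vector_derivative_of_real) (auto intro!: derivative_eq_intros)
    have h2: "((\<lambda>w. exp (- z * w)) has_field_derivative (- z * exp (- z * complex_of_real (ln t)))) (at (complex_of_real (ln t)))"
      by (auto intro!: derivative_eq_intros)
    have "(((\<lambda>w. exp (- z * w)) \<circ> (\<lambda>t. complex_of_real (ln t))) has_vector_derivative
           (complex_of_real (1 / t) * (- z * exp (- z * complex_of_real (ln t))))) (at t)"
      by (rule field_vector_diff_chain_at[OF h1 h2])
    then have "(f has_vector_derivative D t) (at t)"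
      unfolding f_def pw_def D_def by (simp add: o_def field_simps)
    then show ?thesis by (simp add: has_vector_derivative_def)
  qed
  have cont: "continuous_on {a..a+1} f"
    unfolding f_def pw_def using assms(1)
    by (intro continuous_intros) auto
  obtain t where t: "t \<in> {a<..<a+1}" "norm (f (a+1) - f a) \<le> norm ((\<lambda>h. h *\<^sub>R D t) (a + 1 - a))"
    using mvt_general[of a "a+1" f "\<lambda>t h. h *\<^sub>R D t", OF _ cont der] assms by auto
  have tp: "t > 0" using t assms by auto
  have "norm (D t) = norm z * t powr (- Re z - 1)"
    using tp by (simp add: D_def norm_mult norm_divide norm_pw' powr_diff powr_minus divide_simps)
  also have "\<dots> \<le> norm z * a powr (- Re z - 1)"
    using t assms by (intro mult_left_mono powr_mono2') auto
  finally show ?thesis using t by (simp add: f_def norm_minus_commute)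
qed

lemma sums_from_pairs:
  fixes a :: "nat \<Rightarrow> 'a::real_normed_vector"
  assumes P: "(\<lambda>n. a (2*n) + a (2*n+1)) sums P" and a0: "a \<longlonglongrightarrow> 0"
  shows "a sums P"
proof -
  have eq: "(\<Sum>i<2*m. a i) = (\<Sum>i<m. a (2*i) + a (2*i+1))" for m
    by (induction m) (simp_all add: algebra_simps)
  have e: "(\<lambda>m. \<Sum>i<2*m. a i) \<longlonglongrightarrow> P"
    using P unfolding sums_def eq .
  have e2: "(\<lambda>n. \<Sum>i<2*(n div 2). a i) \<longlonglongrightarrow> P"
    using filterlim_compose[OF e filterlim_at_top_div_const_nat[of 2]] by simp
  have a1: "(\<lambda>n. a (n - 1)) \<longlonglongrightarrow> 0"
    using filterlim_compose[OF a0 filterlim_minus_const_nat_at_top[of 1]] by simp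
  have o: "(\<lambda>n. if odd n then a (n - 1) else 0) \<longlonglongrightarrow> 0"
    by (rule Lim_null_comparison[OF _ tendsto_norm_zero[OF a1]]) auto
  have split: "(\<Sum>i<n. a i) = (\<Sum>i<2*(n div 2). a i) + (if odd n then a (n - 1) else 0)" for n
  proof (cases "even n")
    case True then show ?thesis by simp
  next
    case False
    then have n: "n = Suc (2 * (n div 2))" by presburger
    have "(\<Sum>i<n. a i) = (\<Sum>i<Suc (2 * (n div 2)). a i)" using n by simp
    also have "\<dots> = (\<Sum>i<2*(n div 2). a i) + a (2 * (n div 2))" by simp
    finally have "(\<Sum>i<n. a i) = (\<Sum>i<2*(n div 2). a i) + a (2 * (n div 2))" .
    moreover have "n - 1 = 2 * (n div 2)" using n by linarith
    ultimately show ?thesis using False by simp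
  qed
  have L: "(\<lambda>n. (\<Sum>i<2*(n div 2). a i) + (if odd n then a (n - 1) else 0)) \<longlonglongrightarrow> P"
    using tendsto_add[OF e2 o] by simp
  have fe: "(\<lambda>n. (\<Sum>i<2*(n div 2). a i) + (if odd n then a (n - 1) else 0)) = (\<lambda>n. \<Sum>i<n. a i)"
    by (rule ext) (rule split[symmetric])
  show ?thesis unfolding sums_def using L unfolding fe .
qed

lemma pair_le:
  assumes q: "q > 0" and n: "n \<ge> 1" and s: "0 < s" "s \<le> Re z" and C: "norm z \<le> C"
  shows "norm (pw (2 * real n + q) z - pw (2 * real n + q + 1) z) \<le> C * real n powr (- s - 1)"
proof -
  have C0: "0 \<le> C" using C norm_ge_zero order_trans by blast
  have "norm (pw (2 * real n + q) z - pw (2 * real n + q + 1) z) \<le> norm z * (2 * real n + q) powr (- Re z - 1)"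
    using pair_bound[of "2 * real n + q" z] q s by simp
  also have "\<dots> \<le> C * (2 * real n + q) powr (- s - 1)"
  proof (rule mult_mono)
    show "(2 * real n + q) powr (- Re z - 1) \<le> (2 * real n + q) powr (- s - 1)"
      by (rule powr_mono) (use s n q in auto)
  qed (use C C0 in auto)
  also have "\<dots> \<le> C * real n powr (- s - 1)"
    using q n s C0 by (intro mult_left_mono powr_mono2') auto
  finally show ?thesis .
qed

lemma summable_npowr: "s > 0 \<Longrightarrow> summable (\<lambda>n. C * real n powr (- s - 1))"
  by (intro summable_mult) (simp add: summable_real_powr_iff)

lemma zeta_sums:
  assumes q: "q > 0" and z: "Re z > 0"
  shows "(\<lambda>n. (-1) ^ n * pw (real n + q) z) sums zeta_E z q"
    and "(\<lambda>n. pw (2 * real n + q) z - pw (2 * real n + q + 1) z) sums zeta_E z q"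
proof -
  define a where "a = (\<lambda>n. (-1) ^ n * pw (real n + q) z)"
  have ae: "a (2*n) + a (2*n+1) = pw (2 * real n + q) z - pw (2 * real n + q + 1) z" for n
    by (simp add: a_def power_mult add_ac)
  have "summable (\<lambda>n. norm (pw (2 * real n + q) z - pw (2 * real n + q + 1) z))"
  proof (rule summable_comparison_test_ev[OF _ summable_npowr[OF z, of "norm z"]])
    show "\<forall>\<^sub>F n in sequentially. norm (norm (pw (2 * real n + q) z - pw (2 * real n + q + 1) z)) \<le> norm z * real n powr (- Re z - 1)"
    proof (rule eventually_sequentiallyI[of 1])
      fix n :: nat assume "1 \<le> n"
      from pair_le[OF q this z order_refl order_refl]
      show "norm (norm (pw (2 * real n + q) z - pw (2 * real n + q + 1) z)) \<le> norm z * real n powr (- Re z - 1)"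
        by simp
    qed
  qed
  then have "summable (\<lambda>n. a (2*n) + a (2*n+1))"
    unfolding ae by (rule summable_norm_cancel)
  then have sp: "(\<lambda>n. a (2*n) + a (2*n+1)) sums (\<Sum>n. a (2*n) + a (2*n+1))"
    by (rule summable_sums)
  have "(\<lambda>n. norm (a n)) \<longlonglongrightarrow> 0"
  proof -
    have "(\<lambda>n. (real n + q) powr (- Re z)) \<longlonglongrightarrow> 0"
    proof (rule tendsto_neg_powr)
      show "- Re z < 0" using z by simp
      have "filterlim (\<lambda>n. q + real n) at_top sequentially"
        by (rule filterlim_tendsto_add_at_top[OF tendsto_const filterlim_real_sequentially])
      then show "filterlim (\<lambda>n. real n + q) at_top sequentially" by (simp add: add.commute)
    qed
    moreover have na: "norm (a n) = (real n + q) powr (- Re z)" for n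
    proof -
      have "real n + q > 0" using q of_nat_0_le_iff[of n] by linarith
      then show ?thesis by (simp add: a_def norm_mult norm_power norm_pw')
    qed
    ultimately show ?thesis by simp
  qed
  then have a0: "a \<longlonglongrightarrow> 0" by (simp add: tendsto_norm_zero_iff)
  have "a sums (\<Sum>n. a (2*n) + a (2*n+1))"
    by (rule sums_from_pairs[OF sp a0])
  moreover have "suminf a = zeta_E z q" using q by (simp add: a_def zeta_E_pw)
  ultimately have az: "a sums zeta_E z q" by (simp add: sums_iff)
  then show "(\<lambda>n. (-1) ^ n * pw (real n + q) z) sums zeta_E z q" by (simp add: a_def)
  have g: "sum a {n*2..<n*2+2} = pw (2 * real n + q) z - pw (2 * real n + q + 1) z" for n
  proof -
    have "{n*2..<n*2+2} = {2*n, 2*n+1}" by auto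
    then show ?thesis using ae[of n] by simp
  qed
  from sums_group[OF az, of 2] show "(\<lambda>n. pw (2 * real n + q) z - pw (2 * real n + q + 1) z) sums zeta_E z q"
    unfolding g by simp
qed

lemma zeta_holo:
  assumes q: "q > 0"
  shows "(\<lambda>z. zeta_E z q) holomorphic_on {z. Re z > 0}"
proof -
  define P where "P = (\<lambda>n z. pw (2 * real n + q) z - pw (2 * real n + q + 1) z)"
  have "(\<lambda>z. \<Sum>n. P n z) holomorphic_on {z. Re z > 0}"
  proof (rule holomorphic_uniform_sequence[where f = "\<lambda>n z. \<Sum>i<n. P i z"])
    show "open {z. Re z > 0}" by (simp add: open_halfspace_Re_gt)
    show "(\<lambda>z. \<Sum>i<n. P i z) holomorphic_on {z. Re z > 0}" for n
      unfolding P_def by (intro holomorphic_intros)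
    fix x :: complex assume x: "x \<in> {z. Re z > 0}"
    define d where "d = Re x / 2"
    have d: "d > 0" using x by (simp add: d_def)
    have inball: "Re z \<ge> d \<and> norm z \<le> norm x + d" if "z \<in> cball x d" for z
    proof -
      have "norm (x - z) \<le> d" using that by (simp add: dist_norm)
      moreover have "Re x - Re z \<le> norm (x - z)" using abs_Re_le_cmod[of "x - z"] by simp
      moreover have "norm z \<le> norm x + norm (x - z)" using norm_triangle_sub[of z x] by (simp add: norm_minus_commute)
      ultimately show ?thesis using d_def by linarith
    qed
    have "uniform_limit (cball x d) (\<lambda>n z. \<Sum>i<n. P i z) (\<lambda>z. \<Sum>n. P n z) sequentially"
    proof (rule Weierstrass_m_test_ev[OF _ summable_npowr[OF d, of "norm x + d"]])
      show "\<forall>\<^sub>F n in sequentially. \<forall>z\<in>cball x d. norm (P n z) \<le> (norm x + d) * real n powr (- d - 1)"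
      proof (rule eventually_sequentiallyI[of 1], intro ballI)
        fix n :: nat and z assume n: "1 \<le> n" and z: "z \<in> cball x d"
        show "norm (P n z) \<le> (norm x + d) * real n powr (- d - 1)"
        proof -
          have zz: "d \<le> Re z" "norm z \<le> norm x + d" using inball[OF z] by auto
          show ?thesis unfolding P_def by (rule pair_le[OF q n d zz])
        qed
      qed
    qed
    moreover have "cball x d \<subseteq> {z. Re z > 0}"
    proof
      fix z assume "z \<in> cball x d"
      then have "Re z \<ge> d" using inball by blast
      with d show "z \<in> {z. Re z > 0}" by simp
    qed
    ultimately show "\<exists>d>0. cball x d \<subseteq> {z. Re z > 0} \<and>
       uniform_limit (cball x d) (\<lambda>n z. \<Sum>i<n. P i z) (\<lambda>z. \<Sum>n. P n z) sequentially"
      using d by blast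
  qed
  then show ?thesis
  proof (rule holomorphic_transform)
    fix z :: complex assume "z \<in> {z. Re z > 0}"
    then have "(\<lambda>n. P n z) sums zeta_E z q" using zeta_sums(2)[OF q, of z] by (simp add: P_def)
    then show "(\<Sum>n. P n z) = zeta_E z q" by (simp add: sums_iff)
  qed
qed


lemma zeta_mult_identity:
  fixes k :: nat and b :: real
  assumes k: "odd k" "k > 0" and q0: "1 + real k * b > 0" and z: "Re z > 0"
  shows "(\<Sum>r=1..k. (-1)^(r-1) * zeta_E z (real r / real k + b)) =
         exp (z * complex_of_real (ln (real k))) * zeta_E z (1 + real k * b)"
proof -
  define q0 where "q0 = 1 + real k * b"
  define A where "A = (\<lambda>n. (-1) ^ n * pw (real n + q0) z)"
  define Z0 where "Z0 = zeta_E z q0"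
  define L where "L = (\<Sum>r=1..k. (-1)^(r-1) * zeta_E z (real r / real k + b))"
  define c where "c = pw (real k) z"
  have kpos: "real k > 0" using k by simp
  have qpos: "real (Suc i) / real k + b > 0" for i
  proof -
    have "real (Suc i) / real k \<ge> 1 / real k" using kpos by (simp add: divide_right_mono)
    moreover have "1 / real k + b = q0 / real k" using kpos by (simp add: q0_def field_simps)
    moreover have "q0 / real k > 0" using q0 kpos by (simp add: q0_def)
    ultimately show ?thesis by linarith
  qed
  have AZ: "A sums Z0" unfolding A_def Z0_def using zeta_sums(1)[of q0 z] q0 z by (simp add: q0_def)
  have G: "(\<lambda>n. sum A {n*k..<n*k+k}) sums Z0" by (rule sums_group[OF AZ]) (use k in simp)
  have sgn: "(-1::complex) ^ (n * k + i) = (-1) ^ n * (-1) ^ i" for n i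
    using k by (simp add: power_add minus_one_power_iff)
  have arith: "real (n * k + i) + q0 = real k * (real n + real (Suc i) / real k + b)" for n i
    using kpos by (simp add: q0_def field_simps)
  have blk: "sum A {n*k..<n*k+k} = c * (\<Sum>i<k. (-1) ^ i * ((-1) ^ n * pw (real n + real (Suc i) / real k + b) z))" for n
  proof -
    have "sum A {n*k..<n*k+k} = (\<Sum>i<k. A (n * k + i))"
    proof -
      have "sum A {0 + n*k..<k + n*k} = (\<Sum>i=0..<k. A (i + n * k))"
        by (rule sum.shift_bounds_nat_ivl)
      then show ?thesis by (simp add: add.commute lessThan_atLeast0)
    qed
    also have "\<dots> = (\<Sum>i<k. c * ((-1) ^ i * ((-1) ^ n * pw (real n + real (Suc i) / real k + b) z)))"
    proof (rule sum.cong[OF refl])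
      fix i assume "i \<in> {..<k}"
      have pp: "real n + real (Suc i) / real k + b > 0"
        using qpos[of i] by (simp add: add_nonneg_pos)
      have "A (n * k + i) = (-1) ^ (n * k + i) * pw (real k * (real n + real (Suc i) / real k + b)) z"
        unfolding A_def arith ..
      also have "\<dots> = (-1) ^ n * (-1) ^ i * (c * pw (real n + real (Suc i) / real k + b) z)"
        unfolding sgn c_def using pw_mult[OF kpos pp] by simp
      finally show "A (n * k + i) = c * ((-1) ^ i * ((-1) ^ n * pw (real n + real (Suc i) / real k + b) z))"
        by (simp add: algebra_simps)
    qed
    also have "\<dots> = c * (\<Sum>i<k. (-1) ^ i * ((-1) ^ n * pw (real n + real (Suc i) / real k + b) z))"
      by (simp add: sum_distrib_left)
    finally show ?thesis .
  qed
  have Lsum: "L = (\<Sum>i<k. (-1) ^ i * zeta_E z (real (Suc i) / real k + b))"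
    unfolding L_def by (simp add: sum.atLeast1_atMost_eq)
  have S: "(\<lambda>n. \<Sum>i<k. (-1) ^ i * ((-1) ^ n * pw (real n + real (Suc i) / real k + b) z)) sums L"
    unfolding Lsum
  proof (rule sums_sum)
    fix i assume "i \<in> {..<k}"
    have "(\<lambda>n. (-1) ^ n * pw (real n + (real (Suc i) / real k + b)) z) sums zeta_E z (real (Suc i) / real k + b)"
      by (rule zeta_sums(1)[OF qpos z])
    then show "(\<lambda>n. (-1) ^ i * ((-1) ^ n * pw (real n + real (Suc i) / real k + b) z)) sums ((-1) ^ i * zeta_E z (real (Suc i) / real k + b))"
      by (intro sums_mult) (simp add: add.assoc)
  qed
  have "(\<lambda>n. sum A {n*k..<n*k+k}) sums (c * L)"
    unfolding blk by (rule sums_mult[OF S])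
  then have "Z0 = c * L" using G sums_unique2 by blast
  moreover have "exp (z * complex_of_real (ln (real k))) * c = 1"
    by (simp add: c_def pw_def exp_add[symmetric])
  ultimately have "L = exp (z * complex_of_real (ln (real k))) * Z0"
    by (metis mult.assoc mult_1)
  then show ?thesis by (simp add: L_def Z0_def q0_def)
qed


lemma higher_deriv_exp_lin: "(deriv ^^ n) (\<lambda>z. exp (c * z)) = (\<lambda>z::complex. c ^ n * exp (c * z))"
proof (induction n)
  case 0 then show ?case by simp
next
  case (Suc n)
  have "deriv (\<lambda>z. c ^ n * exp (c * z)) w = c ^ Suc n * exp (c * w)" for w
    by (rule DERIV_imp_deriv) (auto intro!: derivative_eq_intros)
  moreover have "(deriv ^^ Suc n) (\<lambda>z. exp (c * z)) = deriv (\<lambda>z. c ^ n * exp (c * z))"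
    by (simp only: funpow.simps comp_apply Suc.IH)
  ultimately show ?case by (simp add: fun_eq_iff)
qed

lemma higher_deriv_sum:
  fixes f :: "'i \<Rightarrow> complex \<Rightarrow> complex"
  assumes "finite I" "\<And>i. i \<in> I \<Longrightarrow> f i holomorphic_on S" "open S" "z \<in> S"
  shows "(deriv ^^ n) (\<lambda>w. \<Sum>i\<in>I. f i w) z = (\<Sum>i\<in>I. (deriv ^^ n) (f i) z)"
  using assms(1,2)
proof (induction I rule: finite_induct)
  case empty
  then show ?case by simp
next
  case (insert x F)
  have "(deriv ^^ n) (\<lambda>w. \<Sum>i\<in>insert x F. f i w) z = (deriv ^^ n) (\<lambda>w. f x w + (\<Sum>i\<in>F. f i w)) z"
    using insert by simp
  also have "\<dots> = (deriv ^^ n) (f x) z + (deriv ^^ n) (\<lambda>w. \<Sum>i\<in>F. f i w) z"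
    using insert assms(3,4)
    by (intro higher_deriv_add[where S=S]) (auto intro!: holomorphic_on_sum)
  finally show ?case using insert by simp
qed

lemma stieltjes_identity:
  fixes k l :: nat and b :: real
  assumes k: "odd k" "k > 0" and q0: "1 + real k * b > 0"
  shows "(\<Sum>r=1..k. (-1) ^ (r - 1) * mod_stieltjes l (real r / real k + b)) =
         real k * (\<Sum>j=0..l. (-1) ^ j * real (l choose j) *
               mod_stieltjes (l - j) (1 + real k * b) * ln (real k) ^ j)"
proof -
  define S where "S = {z::complex. Re z > 0}"
  have S: "open S" "1 \<in> S" by (auto simp: S_def open_halfspace_Re_gt)
  define q0 where "q0 = 1 + real k * b"
  have kpos: "real k > 0" using k by simp
  have qpos: "real r / real k + b > 0" if "r \<in> {1..k}" for r
  proof -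
    have "real r / real k \<ge> 1 / real k" using kpos that by (simp add: divide_right_mono)
    moreover have "1 / real k + b = q0 / real k" using kpos by (simp add: q0_def field_simps)
    moreover have "q0 / real k > 0" using q0 kpos by (simp add: q0_def)
    ultimately show ?thesis by linarith
  qed
  define F where "F = (\<lambda>r z. zeta_E z (real r / real k + b))"
  define Z where "Z = (\<lambda>z. zeta_E z q0)"
  define c where "c = complex_of_real (ln (real k))"
  define E where "E = (\<lambda>z. exp (c * z))"
  define DF where "DF = (\<lambda>r. (deriv ^^ l) (F r) 1)"
  define DZ where "DZ = (\<lambda>m. (deriv ^^ m) Z 1)"
  have holF: "F r holomorphic_on S" if "r \<in> {1..k}" for r
    unfolding F_def S_def by (rule zeta_holo[OF qpos[OF that]])
  have holZ: "Z holomorphic_on S"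
    unfolding Z_def S_def using q0 by (intro zeta_holo) (simp add: q0_def)
  have holE: "E holomorphic_on S" unfolding E_def by (intro holomorphic_intros)
  have holL: "(\<lambda>z. \<Sum>r\<in>{1..k}. (-1) ^ (r - 1) * F r z) holomorphic_on S"
    by (intro holomorphic_intros holF) auto
  have ident: "(\<Sum>r\<in>{1..k}. (-1) ^ (r - 1) * F r z) = E z * Z z" if "z \<in> S" for z
    using zeta_mult_identity[OF k q0, of z] that
    by (simp add: S_def F_def E_def Z_def c_def q0_def mult.commute)
  define D where "D = (deriv ^^ l) (\<lambda>z. \<Sum>r\<in>{1..k}. (-1) ^ (r - 1) * F r z) 1"
  have D1: "D = (\<Sum>r\<in>{1..k}. (-1) ^ (r - 1) * DF r)"
  proof -
    have "D = (\<Sum>r\<in>{1..k}. (deriv ^^ l) (\<lambda>z. (-1) ^ (r - 1) * F r z) 1)"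
      unfolding D_def using S holF
      by (intro higher_deriv_sum[where S=S]) (auto intro!: holomorphic_intros)
    also have "\<dots> = (\<Sum>r\<in>{1..k}. (-1) ^ (r - 1) * DF r)"
      unfolding DF_def using S holF by (intro sum.cong refl higher_deriv_cmult[where A=S]) auto
    finally show ?thesis .
  qed
  have D2: "D = (\<Sum>i=0..l. of_nat (l choose i) * (c ^ i * of_real (real k)) * DZ (l - i))"
  proof -
    have "D = (deriv ^^ l) (\<lambda>z. E z * Z z) 1"
      unfolding D_def using S holL holE holZ ident
      by (intro higher_deriv_transform_within_open[where S=S]) (auto intro!: holomorphic_intros)
    also have "\<dots> = (\<Sum>i=0..l. of_nat (l choose i) * (deriv ^^ i) E 1 * (deriv ^^ (l - i)) Z 1)"
      using S holE holZ by (intro higher_deriv_mult) auto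
    also have "\<dots> = (\<Sum>i=0..l. of_nat (l choose i) * (c ^ i * of_real (real k)) * DZ (l - i))"
    proof (intro sum.cong refl)
      fix i
      have "exp c = of_real (real k)" using kpos by (simp add: c_def exp_of_real)
      then show "of_nat (l choose i) * (deriv ^^ i) E 1 * (deriv ^^ (l - i)) Z 1 =
                 of_nat (l choose i) * (c ^ i * of_real (real k)) * DZ (l - i)"
        unfolding E_def higher_deriv_exp_lin DZ_def by simp
    qed
    finally show ?thesis .
  qed
  have ms: "mod_stieltjes m q = Re ((-1) ^ m * (deriv ^^ m) (\<lambda>z. zeta_E z q) 1)" for m q
    by (simp add: mod_stieltjes_def)
  have Re_pm: "Re ((-1) ^ m * w) = (-1) ^ m * Re w" for m and w :: complex
    by (cases "even m") (simp_all add: minus_one_power_iff)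
  have Re_ofr: "Re (complex_of_real x * w) = x * Re w" for x w by simp
  have LHS: "(\<Sum>r=1..k. (-1) ^ (r - 1) * mod_stieltjes l (real r / real k + b)) = Re ((-1) ^ l * D)"
  proof -
    have "(\<Sum>r=1..k. (-1) ^ (r - 1) * mod_stieltjes l (real r / real k + b)) =
          (\<Sum>r=1..k. Re ((-1) ^ l * ((-1) ^ (r - 1) * DF r)))"
    proof (intro sum.cong refl)
      fix r
      have "(-1::complex) ^ l * ((-1) ^ (r - 1) * DF r) = (-1) ^ (r - 1) * ((-1) ^ l * DF r)"
        by (rule mult.left_commute)
      then show "(-1) ^ (r - 1) * mod_stieltjes l (real r / real k + b) = Re ((-1) ^ l * ((-1) ^ (r - 1) * DF r))"
        by (simp only: Re_pm ms DF_def F_def)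
    qed
    also have "\<dots> = Re ((-1) ^ l * D)"
      by (simp only: D1 Re_sum sum_distrib_left)
    finally show ?thesis .
  qed
  have RHS: "real k * (\<Sum>j=0..l. (-1) ^ j * real (l choose j) * mod_stieltjes (l - j) q0 * ln (real k) ^ j)
             = Re ((-1) ^ l * D)"
  proof -
    have "real k * (\<Sum>j=0..l. (-1) ^ j * real (l choose j) * mod_stieltjes (l - j) q0 * ln (real k) ^ j)
          = (\<Sum>j=0..l. Re ((-1) ^ l * (of_nat (l choose j) * (c ^ j * of_real (real k)) * DZ (l - j))))"
      unfolding sum_distrib_left
    proof (intro sum.cong refl)
      fix j assume j: "j \<in> {0..l}"
      have pw: "(-1::complex) ^ l = (-1) ^ j * (-1) ^ (l - j)"
        using j by (simp flip: power_add)
      have ce: "(-1::complex) ^ l * (of_nat (l choose j) * (c ^ j * of_real (real k)) * DZ (l - j)) =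
            complex_of_real (real k * (-1) ^ j * real (l choose j) * ln (real k) ^ j) * ((-1) ^ (l - j) * DZ (l - j))"
        unfolding pw c_def by (simp add: algebra_simps)
      have "mod_stieltjes (l - j) q0 = Re ((-1) ^ (l - j) * DZ (l - j))"
        by (simp add: ms DZ_def Z_def)
      then show "real k * ((-1) ^ j * real (l choose j) * mod_stieltjes (l - j) q0 * ln (real k) ^ j) =
            Re ((-1) ^ l * (of_nat (l choose j) * (c ^ j * of_real (real k)) * DZ (l - j)))"
        unfolding ce Re_ofr by (simp add: mult_ac)
    qed
    also have "\<dots> = Re ((-1) ^ l * D)"
      by (simp only: D2 Re_sum sum_distrib_left)
    finally show ?thesis .
  qed
  show ?thesis using LHS RHS by (simp add: q0_def)
qed


lemma zeta_shift1:
  assumes q: "q > 0"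
  shows "zeta_E 1 q = 1 / complex_of_real q - zeta_E 1 (q + 1)"
proof -
  define f where "f = (\<lambda>n. (-1) ^ n * pw (real n + q) 1)"
  have f: "f sums zeta_E 1 q" unfolding f_def by (rule zeta_sums(1)[OF q]) simp
  have g: "(\<lambda>n. (-1) ^ n * pw (real n + (q + 1)) 1) sums zeta_E 1 (q + 1)"
    by (rule zeta_sums(1)) (use q in simp_all)
  have "(\<lambda>n. f (Suc n)) = (\<lambda>n. - ((-1) ^ n * pw (real n + (q + 1)) 1))"
    by (simp add: f_def fun_eq_iff add_ac)
  then have "(\<lambda>n. f (Suc n)) sums (- zeta_E 1 (q + 1))"
    using sums_minus[OF g] by simp
  moreover have "(\<lambda>n. f (Suc n)) sums (zeta_E 1 q - f 0)"
    using sums_Suc_iff[of f "zeta_E 1 q - f 0"] f by simp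
  ultimately have "zeta_E 1 q - f 0 = - zeta_E 1 (q + 1)" using sums_unique2 by blast
  moreover have "f 0 = 1 / complex_of_real q" using q by (simp add: f_def pw_1)
  ultimately show ?thesis by (simp add: algebra_simps)
qed

theorem proposition5p6:
  fixes k l :: nat and a :: real
  assumes "odd k" and "k > 0"
  shows "((\<forall>r\<in>{1..k}. real r / real k - a > 0) \<and> 1 - a * real k > 0 \<longrightarrow>
           (\<Sum>r=1..k. (-1) ^ (r - 1) * mod_stieltjes l (real r / real k - a)) =
           real k * (\<Sum>j=0..l. (-1) ^ j * real (l choose j) *
               mod_stieltjes (l - j) (1 - a * real k) * ln (real k) ^ j))
       \<and> (a > 0 \<and> (\<forall>r\<in>{1..k}. real r / real k + a > 0) \<and> 1 + a * real k > 0
            \<and> a * real k > 0 \<longrightarrow>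
           (\<Sum>r=1..k. (-1) ^ (r - 1) * mod_stieltjes l (real r / real k + a)) =
           real k * (\<Sum>j<l. (-1) ^ j * real (l choose j) *
               mod_stieltjes (l - j) (1 + a * real k) * ln (real k) ^ j)
           + real k * (-1) ^ l * mod_digamma (a * real k) * ln (real k) ^ l
           + (-1) ^ l / a * ln (real k) ^ l)"
proof (intro conjI impI)
  assume h: "(\<forall>r\<in>{1..k}. real r / real k - a > 0) \<and> 1 - a * real k > 0"
  then have "1 + real k * (- a) > 0" by (simp add: mult.commute)
  from stieltjes_identity[OF assms this, of l]
  show "(\<Sum>r=1..k. (-1) ^ (r - 1) * mod_stieltjes l (real r / real k - a)) =
           real k * (\<Sum>j=0..l. (-1) ^ j * real (l choose j) *
               mod_stieltjes (l - j) (1 - a * real k) * ln (real k) ^ j)"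
    by (simp add: mult.commute)
next
  assume h: "a > 0 \<and> (\<forall>r\<in>{1..k}. real r / real k + a > 0) \<and> 1 + a * real k > 0 \<and> a * real k > 0"
  then have ak: "a * real k > 0" and a0: "a > 0" by auto
  have kpos: "real k > 0" using assms by simp
  have "1 + real k * a > 0" using h by (simp add: mult.commute)
  from stieltjes_identity[OF assms this, of l]
  have I: "(\<Sum>r=1..k. (-1) ^ (r - 1) * mod_stieltjes l (real r / real k + a)) =
           real k * (\<Sum>j=0..l. (-1) ^ j * real (l choose j) *
               mod_stieltjes (l - j) (1 + a * real k) * ln (real k) ^ j)"
    by (simp add: mult.commute)
  have split: "(\<Sum>j=0..l. (-1) ^ j * real (l choose j) * mod_stieltjes (l - j) (1 + a * real k) * ln (real k) ^ j)
      = (\<Sum>j<l. (-1) ^ j * real (l choose j) * mod_stieltjes (l - j) (1 + a * real k) * ln (real k) ^ j)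
        + (-1) ^ l * mod_stieltjes 0 (1 + a * real k) * ln (real k) ^ l"
    by (simp add: atLeast0AtMost lessThan_Suc_atMost[symmetric])
  have "zeta_E 1 (a * real k) = 1 / complex_of_real (a * real k) - zeta_E 1 (a * real k + 1)"
    by (rule zeta_shift1[OF ak])
  then have ms0: "mod_stieltjes 0 (1 + a * real k) = 1 / (a * real k) + mod_digamma (a * real k)"
    by (simp add: mod_digamma_def mod_stieltjes_def add.commute)
  show "(\<Sum>r=1..k. (-1) ^ (r - 1) * mod_stieltjes l (real r / real k + a)) =
           real k * (\<Sum>j<l. (-1) ^ j * real (l choose j) *
               mod_stieltjes (l - j) (1 + a * real k) * ln (real k) ^ j)
           + real k * (-1) ^ l * mod_digamma (a * real k) * ln (real k) ^ l
           + (-1) ^ l / a * ln (real k) ^ l"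
    unfolding I split ms0 using kpos a0 by (simp add: field_simps)
qed


end
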